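(* Let $q$ be a prime power and $n\in\{q-1,q,q+1\}$. Then any two linear $(n,q^{n-2},3)_q$ codes over $\mathbb{F}_q$ are equivalent.
   Context: An $(n,M,d)_q$ code over $\mathbb{F}_q$ is a subset of $\mathbb{F}_q^n$ with $M$ elements and minimum Hamming distance $d$; it is linear if it is an $\mathbb{F}_q$-subspace. Two codes of length $n$ are equivalent if one can be obtained from the other by a permutation of the coordinates followed by a permutation of the symbols of $\mathbb{F}_q$ in each coordinate separately (possibly different permutations in different coordinates). *)

theory Defs
  imports Main "HOL-Computational_Algebra.Primes" "HOL-Combinatorics.Permutations" "HOL-Library.Cardinality"
begin

definition words :: "nat \<Rightarrow> 'a list set" where
  "words n = {x. length x = n}"

definition hamming_dist :: "'a list \<Rightarrow> 'a list \<Rightarrow> nat" where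
  "hamming_dist x y = card {i. i < length x \<and> x ! i \<noteq> y ! i}"

definition is_code :: "nat \<Rightarrow> nat \<Rightarrow> nat \<Rightarrow> 'a list set \<Rightarrow> bool" where
  "is_code n M d C \<longleftrightarrow> C \<subseteq> words n \<and> finite C \<and> card C = M \<and>
     (\<forall>x\<in>C. \<forall>y\<in>C. x \<noteq> y \<longrightarrow> d \<le> hamming_dist x y) \<and>
     (\<exists>x\<in>C. \<exists>y\<in>C. x \<noteq> y \<and> hamming_dist x y = d)"

definition linear_code :: "nat \<Rightarrow> 'a::field list set \<Rightarrow> bool" where
  "linear_code n C \<longleftrightarrow> C \<subseteq> words n \<and> replicate n 0 \<in> C \<and>
     (\<forall>x\<in>C. \<forall>y\<in>C. map2 (+) x y \<in> C) \<and>
     (\<forall>c. \<forall>x\<in>C. map ((*) c) x \<in> C)"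

definition equivalent_codes :: "nat \<Rightarrow> 'a list set \<Rightarrow> 'a list set \<Rightarrow> bool" where
  "equivalent_codes n C D \<longleftrightarrow>
     (\<exists>\<sigma> \<pi>. \<sigma> permutes {0..<n} \<and> (\<forall>i<n. bij (\<pi> i)) \<and>
        D = (\<lambda>x. map (\<lambda>i. \<pi> i (x ! \<sigma> i)) [0..<n]) ` C)"

end

theory Submission
  imports Defs
begin


definition slope :: "'a::field \<Rightarrow> 'a \<Rightarrow> 'a option" where
  "slope x y = (if y = 0 then None else Some (x / y))"
definition rep1 :: "'a::field option \<Rightarrow> 'a" where
  "rep1 p = (case p of None \<Rightarrow> 1 | Some t \<Rightarrow> t)"
definition rep2 :: "'a::field option \<Rightarrow> 'a" where
  "rep2 p = (case p of None \<Rightarrow> 0 | Some t \<Rightarrow> 1)"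
definition mob :: "'a::field \<Rightarrow> 'a \<Rightarrow> 'a \<Rightarrow> 'a \<Rightarrow> 'a option \<Rightarrow> 'a option" where
  "mob a b c d p = slope (a * rep1 p + b * rep2 p) (c * rep1 p + d * rep2 p)"

lemma slope_eq:
  fixes x1 y1 x2 y2 :: "'a::field"
  assumes "x1 \<noteq> 0 \<or> y1 \<noteq> 0" "x2 \<noteq> 0 \<or> y2 \<noteq> 0"
  shows "slope x1 y1 = slope x2 y2 \<longleftrightarrow> x1 * y2 = x2 * y1"
  using assms by (auto simp: slope_def field_simps)

lemma rep_nz: "rep1 p \<noteq> 0 \<or> rep2 p \<noteq> 0"
  by (cases p) (auto simp: rep1_def rep2_def)

lemma slope_rep: "slope (rep1 p) (rep2 p) = p"
  by (cases p) (auto simp: rep1_def rep2_def slope_def)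

lemma mdet:
  fixes a b c d x1 y1 x2 y2 :: "'a::comm_ring"
  shows "(a*x1 + b*y1) * (c*x2 + d*y2) - (a*x2+b*y2) * (c*x1+d*y1) = (a*d - b*c) * (x1*y2 - x2*y1)"
  by (simp add: algebra_simps)

lemma m_nz:
  fixes a b c d x y :: "'a::field"
  assumes "a*d - b*c \<noteq> 0" "x \<noteq> 0 \<or> y \<noteq> 0"
  shows "a*x + b*y \<noteq> 0 \<or> c*x + d*y \<noteq> 0"
proof (rule ccontr)
  assume "\<not> ?thesis"
  then have e1: "a*x + b*y = 0" and e2: "c*x + d*y = 0" by auto
  have "(a*d - b*c) * x = d*(a*x+b*y) - b*(c*x+d*y)" by (simp add: algebra_simps)
  then have "(a*d - b*c) * x = 0" using e1 e2 by simp
  moreover have "(a*d - b*c) * y = a*(c*x+d*y) - c*(a*x+b*y)" by (simp add: algebra_simps)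
  then have "(a*d - b*c) * y = 0" using e1 e2 by simp
  ultimately show False using assms by auto
qed

lemma mob_inj:
  fixes a b c d :: "'a::field"
  assumes "a*d - b*c \<noteq> 0"
  shows "inj (mob a b c d)"
proof (rule injI)
  fix p p' assume eq: "mob a b c d p = mob a b c d p'"
  let ?x1 = "rep1 p" and ?y1 = "rep2 p" and ?x2 = "rep1 p'" and ?y2 = "rep2 p'"
  have nz1: "a*?x1 + b*?y1 \<noteq> 0 \<or> c*?x1 + d*?y1 \<noteq> 0" using m_nz[OF assms rep_nz] .
  have nz2: "a*?x2 + b*?y2 \<noteq> 0 \<or> c*?x2 + d*?y2 \<noteq> 0" using m_nz[OF assms rep_nz] .
  from eq have "(a*?x1 + b*?y1) * (c*?x2 + d*?y2) = (a*?x2+b*?y2) * (c*?x1+d*?y1)"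
    unfolding mob_def using slope_eq[OF nz1 nz2] by simp
  then have "(a*d - b*c) * (?x1*?y2 - ?x2*?y1) = 0" using mdet[of a ?x1 b ?y1 c ?x2 d ?y2] by simp
  then have "?x1*?y2 = ?x2*?y1" using assms by simp
  then have "slope ?x1 ?y1 = slope ?x2 ?y2" using slope_eq[OF rep_nz rep_nz, of p p'] by simp
  then show "p = p'" by (simp add: slope_rep)
qed

lemma mob_slope:
  fixes a b c d x y :: "'a::field"
  assumes "a*d - b*c \<noteq> 0" "x \<noteq> 0 \<or> y \<noteq> 0"
  shows "mob a b c d (slope x y) = slope (a*x + b*y) (c*x + d*y)"
proof -
  let ?p = "slope x y"
  let ?x1 = "rep1 ?p" and ?y1 = "rep2 ?p"
  have "slope ?x1 ?y1 = slope x y" by (simp add: slope_rep)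
  then have "?x1 * y = x * ?y1" using slope_eq[OF rep_nz assms(2)] by simp
  then have "(a*?x1 + b*?y1) * (c*x + d*y) - (a*x+b*y) * (c*?x1+d*?y1) = 0"
    by (simp add: mdet)
  then show ?thesis unfolding mob_def
    using slope_eq[OF m_nz[OF assms(1) rep_nz] m_nz[OF assms]] by simp
qed

lemma two_points:
  fixes a1 a2 b1 b2 :: "'a::field option"
  assumes "a1 \<noteq> a2" "b1 \<noteq> b2"
  shows "\<exists>a b c d. a*d - b*c \<noteq> (0::'a) \<and> mob a b c d a1 = b1 \<and> mob a b c d a2 = b2"
proof -
  define u1 where "u1 = rep1 a1" define u2 where "u2 = rep2 a1"
  define w1 where "w1 = rep1 a2" define w2 where "w2 = rep2 a2"
  define v1 where "v1 = rep1 b1" define v2 where "v2 = rep2 b1"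
  define z1 where "z1 = rep1 b2" define z2 where "z2 = rep2 b2"
  have du: "u1*w2 - w1*u2 \<noteq> 0"
    using slope_eq[OF rep_nz rep_nz, of a1 a2] assms(1) by (simp add: slope_rep u1_def u2_def w1_def w2_def)
  have dv: "v1*z2 - z1*v2 \<noteq> 0"
    using slope_eq[OF rep_nz rep_nz, of b1 b2] assms(2) by (simp add: slope_rep v1_def v2_def z1_def z2_def)
  define \<delta> where "\<delta> = u1*w2 - w1*u2"
  define a where "a = (v1*w2 - z1*u2) / \<delta>"
  define b where "b = (z1*u1 - v1*w1) / \<delta>"
  define c where "c = (v2*w2 - z2*u2) / \<delta>"
  define d where "d = (z2*u1 - v2*w1) / \<delta>"
  have dne: "\<delta> \<noteq> 0" using du \<delta>_def by simp
  have e1: "a*u1 + b*u2 = v1" "c*u1 + d*u2 = v2"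
    unfolding a_def b_def c_def d_def using dne
    by (simp_all add: divide_simps \<delta>_def) (simp_all add: algebra_simps)
  have e2: "a*w1 + b*w2 = z1" "c*w1 + d*w2 = z2"
    unfolding a_def b_def c_def d_def using dne
    by (simp_all add: divide_simps \<delta>_def) (simp_all add: algebra_simps)
  have "(a*d - b*c) * (u1*w2 - w1*u2) = v1*z2 - z1*v2"
    using mdet[of a u1 b u2 c w1 d w2] e1 e2 by simp
  then have det: "a*d - b*c \<noteq> 0" using dv by auto
  have "mob a b c d a1 = b1" unfolding mob_def
    using e1 by (simp add: u1_def u2_def v1_def v2_def slope_rep)
  moreover have "mob a b c d a2 = b2" unfolding mob_def
    using e2 by (simp add: w1_def w2_def z1_def z2_def slope_rep)
  ultimately show ?thesis using det by blast
qed


lemma prop_scalar: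
  fixes u1 u2 v1 v2 :: "'a::field"
  assumes "u1 \<noteq> 0 \<or> u2 \<noteq> 0" "v1 \<noteq> 0 \<or> v2 \<noteq> 0" "u1 * v2 = v1 * u2"
  shows "\<exists>d. d \<noteq> 0 \<and> v1 = d * u1 \<and> v2 = d * u2"
proof (cases "u1 = 0")
  case True
  then have "u2 \<noteq> 0" using assms by auto
  then have "v1 = 0" using assms True by auto
  then show ?thesis using True \<open>u2 \<noteq> 0\<close> assms
    by (intro exI[of _ "v2/u2"]) auto
next
  case False
  then show ?thesis using assms
    by (intro exI[of _ "v1/u1"]) (auto simp: field_simps)
qed

lemma mob_set:
  fixes A B :: "'a::{finite,field} option set"
  assumes "card A = card B" "card A \<le> 2"
  shows "\<exists>a b c d. a*d - b*c \<noteq> (0::'a) \<and> mob a b c d ` A = B"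
proof -
  have "card A = 0 \<or> card A = 1 \<or> card A = 2" using assms(2) by linarith
  then show ?thesis
  proof (elim disjE)
    assume h: "card A = 0"
    have "finite A" "finite B" by simp_all
    then have "A = {}" "B = {}" using assms h by auto
    then show ?thesis by (intro exI[of _ 1] exI[of _ 0]) auto
  next
    assume h: "card A = 1"
    then obtain x where x: "A = {x}" by (auto simp: card_Suc_eq)
    obtain y where y: "B = {y}" using h assms by (auto simp: card_Suc_eq)
    obtain x' :: "'a option" where "x' \<noteq> x" by (metis option.distinct(1))
    obtain y' :: "'a option" where "y' \<noteq> y" by (metis option.distinct(1))
    from two_points[OF \<open>x' \<noteq> x\<close>[symmetric] \<open>y' \<noteq> y\<close>[symmetric]]
    show ?thesis using x y by auto
  next
    assume h: "card A = 2"
    then obtain x x' where x: "A = {x, x'}" "x \<noteq> x'" by (auto simp: card_2_iff)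
    obtain y y' where y: "B = {y, y'}" "y \<noteq> y'" using h assms by (auto simp: card_2_iff)
    from two_points[OF x(2) y(2)]
    show ?thesis using x y by auto
  qed
qed

lemma match:
  fixes h1 h2 g1 g2 :: "nat \<Rightarrow> 'a::{finite,field}"
  assumes n2: "2 \<le> n" and nle: "n \<le> CARD('a) + 1" and nge: "CARD('a) \<le> n + 1"
    and dh: "\<forall>i<n. \<forall>j<n. i \<noteq> j \<longrightarrow> h1 i * h2 j \<noteq> h1 j * h2 i"
    and dg: "\<forall>i<n. \<forall>j<n. i \<noteq> j \<longrightarrow> g1 i * g2 j \<noteq> g1 j * g2 i"
  shows "\<exists>\<sigma> d m11 m12 m21 m22. \<sigma> permutes {..<n} \<and> (\<forall>i<n. d i \<noteq> 0 \<and>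
     g1 i = d i * (m11 * h1 (\<sigma> i) + m12 * h2 (\<sigma> i)) \<and>
     g2 i = d i * (m21 * h1 (\<sigma> i) + m22 * h2 (\<sigma> i)))"
proof -
  have nzh: "h1 j \<noteq> 0 \<or> h2 j \<noteq> 0" if "j < n" for j
  proof -
    let ?k = "if j = 0 then 1 else 0"
    have "?k < n" "?k \<noteq> j" using n2 by auto
    then show ?thesis using dh that by (metis mult_zero_left mult_zero_right)
  qed
  have nzg: "g1 j \<noteq> 0 \<or> g2 j \<noteq> 0" if "j < n" for j
  proof -
    let ?k = "if j = 0 then 1 else 0"
    have "?k < n" "?k \<noteq> j" using n2 by auto
    then show ?thesis using dg that by (metis mult_zero_left mult_zero_right)
  qed
  define P where "P j = slope (h1 j) (h2 j)" for j
  define Q where "Q j = slope (g1 j) (g2 j)" for j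
  have injP: "inj_on P {..<n}"
  proof (rule inj_onI)
    fix i j assume "i \<in> {..<n}" "j \<in> {..<n}" "P i = P j"
    then show "i = j" using dh slope_eq[OF nzh nzh, of i j] unfolding P_def by fastforce
  qed
  have injQ: "inj_on Q {..<n}"
  proof (rule inj_onI)
    fix i j assume "i \<in> {..<n}" "j \<in> {..<n}" "Q i = Q j"
    then show "i = j" using dg slope_eq[OF nzg nzg, of i j] unfolding Q_def by fastforce
  qed
  define A where "A = UNIV - P ` {..<n}"
  define B where "B = UNIV - Q ` {..<n}"
  have cA: "card A = CARD('a) + 1 - n"
    unfolding A_def using card_image[OF injP] by (simp add: card_Diff_subset)
  have cB: "card B = CARD('a) + 1 - n"
    unfolding B_def using card_image[OF injQ] by (simp add: card_Diff_subset)
  obtain a b c d where det: "a*d - b*c \<noteq> (0::'a)" and AB: "mob a b c d ` A = B"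
  proof -
    have "card A \<le> 2" using cA nge by simp
    then show ?thesis using mob_set[of A B] cA cB that by metis
  qed
  define \<tau> where "\<tau> = mob a b c d"
  have inj\<tau>: "inj \<tau>" unfolding \<tau>_def using mob_inj[OF det] .
  then have surj\<tau>: "surj \<tau>" using finite_UNIV_inj_surj[of \<tau>] by simp
  have imP: "\<tau> ` (P ` {..<n}) = Q ` {..<n}"
  proof -
    have "P ` {..<n} = UNIV - A" unfolding A_def by auto
    then have "\<tau> ` (P ` {..<n}) = \<tau> ` UNIV - \<tau> ` A" using image_set_diff[OF inj\<tau>] by simp
    also have "\<dots> = UNIV - B" using surj\<tau> AB \<tau>_def by simp
    also have "\<dots> = Q ` {..<n}" unfolding B_def by auto
    finally show ?thesis .
  qed
  have bTP: "bij_betw (\<tau> \<circ> P) {..<n} (Q ` {..<n})"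
    unfolding bij_betw_def using imP inj_on_subset[OF inj\<tau>, of "P ` {..<n}"] comp_inj_on[OF injP, of \<tau>]
    by (simp add: image_comp)
  define \<sigma> where "\<sigma> i = (if i < n then inv_into {..<n} (\<tau> \<circ> P) (Q i) else i)" for i
  have b1: "bij_betw (inv_into {..<n} (\<tau> \<circ> P) \<circ> Q) {..<n} {..<n}"
    using bij_betw_trans[OF inj_on_imp_bij_betw[OF injQ] bij_betw_inv_into[OF bTP]] .
  have bs: "bij_betw \<sigma> {..<n} {..<n}"
    using b1 by (rule bij_betw_cong[THEN iffD1, rotated]) (simp add: \<sigma>_def)
  have perm: "\<sigma> permutes {..<n}"
    by (rule bij_imp_permutes[OF bs]) (simp add: \<sigma>_def)
  have key: "\<tau> (P (\<sigma> i)) = Q i" if "i < n" for i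
  proof -
    have "Q i \<in> (\<tau> \<circ> P) ` {..<n}" using imP that by (auto simp: image_comp)
    then show ?thesis using that \<sigma>_def f_inv_into_f[of "Q i" "\<tau> \<circ> P" "{..<n}"] by simp
  qed
  have ex: "\<exists>e. e \<noteq> 0 \<and> g1 i = e * (a * h1 (\<sigma> i) + b * h2 (\<sigma> i)) \<and> g2 i = e * (c * h1 (\<sigma> i) + d * h2 (\<sigma> i))"
    if "i < n" for i
  proof -
    have si: "\<sigma> i < n" using bs that by (auto simp: bij_betw_def)
    have "slope (a * h1 (\<sigma> i) + b * h2 (\<sigma> i)) (c * h1 (\<sigma> i) + d * h2 (\<sigma> i)) = slope (g1 i) (g2 i)"
      using key[OF that] mob_slope[OF det nzh[OF si]] unfolding \<tau>_def P_def Q_def by simp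
    then have "(a * h1 (\<sigma> i) + b * h2 (\<sigma> i)) * g2 i = g1 i * (c * h1 (\<sigma> i) + d * h2 (\<sigma> i))"
      using slope_eq[OF m_nz[OF det nzh[OF si]] nzg[OF that]] by simp
    then show ?thesis using prop_scalar[OF m_nz[OF det nzh[OF si]] nzg[OF that]] by blast
  qed
  then obtain e where "\<forall>i<n. e i \<noteq> 0 \<and> g1 i = e i * (a * h1 (\<sigma> i) + b * h2 (\<sigma> i)) \<and> g2 i = e i * (c * h1 (\<sigma> i) + d * h2 (\<sigma> i))"
    by metis
  then show ?thesis using perm by blast
qed



definition lf :: "nat \<Rightarrow> (nat \<Rightarrow> 'a::comm_ring) \<Rightarrow> 'a list \<Rightarrow> 'a" where
  "lf n w x = (\<Sum>j<n. x ! j * w j)"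

lemma lf_add: "length x = n \<Longrightarrow> length y = n \<Longrightarrow> lf n w (map2 (+) x y) = lf n w x + lf n w y"
  unfolding lf_def by (simp add: sum.distrib[symmetric] algebra_simps)

lemma lf_smul: "length x = n \<Longrightarrow> lf n w (map ((*) c) x) = c * lf n w x"
  unfolding lf_def by (simp add: sum_distrib_left algebra_simps)

lemma lf_zero: "lf n w (replicate n 0) = 0"
  unfolding lf_def by simp

lemma hd_le_support:
  assumes "finite S" "\<forall>i<length x. i \<notin> S \<longrightarrow> x ! i = y ! i"
  shows "hamming_dist x y \<le> card S"
  unfolding hamming_dist_def using assms by (intro card_mono) auto

lemma hd_le_len: "hamming_dist x y \<le> length x"
  unfolding hamming_dist_def by (rule order_trans[OF card_mono[of "{..<length x}"]]) auto

lemma words_card: "card (words m :: 'a::finite list set) = CARD('a) ^ m"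
  using card_lists_length_eq[of "UNIV :: 'a set" m] by (simp add: words_def)

lemma words_finite: "finite (words m :: 'a::finite list set)"
  using finite_lists_length_eq[of "UNIV :: 'a set" m] by (simp add: words_def)

lemma dep_pair:
  fixes x1 y1 x2 y2 :: "'a::field"
  assumes "x1 * y2 = x2 * y1"
  shows "\<exists>a b. (a \<noteq> 0 \<or> b \<noteq> 0) \<and> a * x1 + b * x2 = 0 \<and> a * y1 + b * y2 = 0"
proof (cases "x1 \<noteq> 0 \<or> x2 \<noteq> 0")
  case True
  then show ?thesis using assms by (intro exI[of _ x2] exI[of _ "-x1"]) (auto simp: algebra_simps)
next
  case F: False
  show ?thesis
  proof (cases "y1 \<noteq> 0 \<or> y2 \<noteq> 0")
    case True
    then show ?thesis using F by (intro exI[of _ y2] exI[of _ "-y1"]) (auto simp: algebra_simps)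
  next
    case False
    then show ?thesis using F by (intro exI[of _ 1] exI[of _ 0]) auto
  qed
qed

lemma code_structure:
  fixes C :: "'a::{finite,field} list set"
  assumes lin: "linear_code n C" and cod: "is_code n (CARD('a) ^ (n-2)) 3 C"
  shows "3 \<le> n \<and> (\<exists>h1 h2. (\<forall>i<n. \<forall>j<n. i \<noteq> j \<longrightarrow> h1 i * h2 j \<noteq> h1 j * h2 i) \<and>
        C = {x \<in> words n. lf n h1 x = 0 \<and> lf n h2 x = 0})"
proof -
  have Cw: "C \<subseteq> words n" and finC: "finite C" and cardC: "card C = CARD('a) ^ (n-2)"
    and dist: "\<forall>x\<in>C. \<forall>y\<in>C. x \<noteq> y \<longrightarrow> 3 \<le> hamming_dist x y"
    and ex: "\<exists>x\<in>C. \<exists>y\<in>C. x \<noteq> y \<and> hamming_dist x y = 3"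
    using cod unfolding is_code_def by auto
  have zC: "replicate n 0 \<in> C" and addC: "\<And>x y. x \<in> C \<Longrightarrow> y \<in> C \<Longrightarrow> map2 (+) x y \<in> C"
    and smC: "\<And>c x. x \<in> C \<Longrightarrow> map ((*) c) x \<in> C"
    using lin unfolding linear_code_def by auto
  have lenC: "length x = n" if "x \<in> C" for x using Cw that by (auto simp: words_def)
  have n3: "3 \<le> n" using ex hd_le_len lenC by metis
  define m where "m = n - 2"
  have nm: "n = Suc (Suc m)" using n3 m_def by simp
  have subC: "map2 (+) x (map ((*) c) y) \<in> C" if "x \<in> C" "y \<in> C" for x y c
    using addC[OF that(1) smC[OF that(2)]] .
  have nth_sub: "map2 (+) x (map ((*) c) y) ! i = x ! i + c * y ! i" if "length x = n" "length y = n" "i < n" for x y c i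
    using that by simp
  have injT: "x = y" if "x \<in> C" "y \<in> C" "take m x = take m y" for x y
  proof (rule ccontr)
    assume "x \<noteq> y"
    then have "3 \<le> hamming_dist x y" using dist that by auto
    moreover have "hamming_dist x y \<le> card {m, Suc m}"
    proof (rule hd_le_support)
      show "\<forall>i<length x. i \<notin> {m, Suc m} \<longrightarrow> x ! i = y ! i"
      proof (intro allI impI)
        fix i assume "i < length x" "i \<notin> {m, Suc m}"
        then have "i < m" using lenC[OF that(1)] nm by auto
        then show "x ! i = y ! i" using that(3) by (metis nth_take)
      qed
    qed simp
    ultimately show False by (simp add: card_insert_if)
  qed
  have surjT: "take m ` C = words m"
  proof (rule card_subset_eq[OF words_finite])
    show "take m ` C \<subseteq> words m" using lenC nm by (auto simp: words_def)
    have "inj_on (take m) C" using injT by (auto intro: inj_onI)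
    then show "card (take m ` C) = card (words m :: 'a list set)"
      using card_image cardC words_card m_def by metis
  qed
  define e where "e i = (replicate m (0::'a))[i := 1]" for i
  have "\<forall>i\<in>{..<m}. \<exists>x. x \<in> C \<and> take m x = e i"
  proof
    fix i assume "i \<in> {..<m}"
    have "e i \<in> words m" by (simp add: e_def words_def)
    then show "\<exists>x. x \<in> C \<and> take m x = e i" using surjT by (metis imageE)
  qed
  then obtain c where c: "\<And>i. i < m \<Longrightarrow> c i \<in> C \<and> take m (c i) = e i"
    by (metis bchoice lessThan_iff)
  have cnth: "c k ! j = (if j = k then 1 else 0)" if "k < m" "j < m" for k j
  proof -
    have "c k ! j = take m (c k) ! j" using that by simp
    also have "\<dots> = (if j = k then 1 else 0)" using c[OF that(1)] that by (simp add: e_def nth_list_update)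
    finally show ?thesis .
  qed
  have vanish: "\<forall>x\<in>C. lf n w x = 0" if wc: "\<And>k. k < m \<Longrightarrow> lf n w (c k) = 0" for w
  proof -
    have "\<forall>x\<in>C. (\<forall>i. k \<le> i \<and> i < m \<longrightarrow> x ! i = 0) \<longrightarrow> lf n w x = 0" for k
    proof (induction k)
      case 0
      show ?case
      proof (intro ballI impI)
        fix x assume x: "x \<in> C" "\<forall>i. 0 \<le> i \<and> i < m \<longrightarrow> x ! i = 0"
        have "take m x = take m (replicate n 0)"
          using x lenC[OF x(1)] nm by (intro nth_equalityI) (auto simp del: replicate.simps)
        then have "x = replicate n 0" using injT[OF x(1) zC] by simp
        then show "lf n w x = 0" by (simp add: lf_zero)
      qed
    next
      case (Suc k)
      show ?case
      proof (intro ballI impI)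
        fix x assume x: "x \<in> C" "\<forall>i. Suc k \<le> i \<and> i < m \<longrightarrow> x ! i = 0"
        show "lf n w x = 0"
        proof (cases "k < m")
          case False
          then show ?thesis using Suc.IH x by auto
        next
          case True
          define x' where "x' = map2 (+) x (map ((*) (- (x ! k))) (c k))"
          have x'C: "x' \<in> C" unfolding x'_def using subC x(1) c True by blast
          have "\<forall>i. k \<le> i \<and> i < m \<longrightarrow> x' ! i = 0"
          proof (intro allI impI)
            fix i assume i: "k \<le> i \<and> i < m"
            have "x' ! i = x ! i + (- (x ! k)) * c k ! i"
              unfolding x'_def using nth_sub lenC x(1) c True i nm by simp
            then show "x' ! i = 0" using cnth[OF True, of i] i x(2) by (cases "i = k") auto
          qed
          then have "lf n w x' = 0" using Suc.IH x'C by blast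
          moreover have "lf n w x' = lf n w x + (- (x ! k)) * lf n w (c k)"
          proof -
            have l1: "length x = n" "length (c k) = n" using lenC x(1) c True by auto
            then have "length (map ((*) (- (x ! k))) (c k)) = n" by simp
            then show ?thesis unfolding x'_def using lf_add[OF l1(1)] lf_smul[OF l1(2)] by simp
          qed
          ultimately show ?thesis using wc[OF True] by simp
        qed
      qed
    qed
    from this[of m] show ?thesis by auto
  qed
  define h1 where "h1 j = (if j < m then c j ! m else if j = m then -1 else 0)" for j
  define h2 where "h2 j = (if j < m then c j ! Suc m else if j = m then 0 else -1)" for j
  have split: "lf n w x = (\<Sum>j<m. x ! j * w j) + x ! m * w m + x ! Suc m * w (Suc m)" for w and x :: "'a list"
    unfolding lf_def nm by simp
  have s1: "lf n h1 x = (\<Sum>j<m. x ! j * c j ! m) - x ! m" for x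
    unfolding split by (simp add: h1_def)
  have s2: "lf n h2 x = (\<Sum>j<m. x ! j * c j ! Suc m) - x ! Suc m" for x
    unfolding split by (simp add: h2_def)
  have sumc: "(\<Sum>j<m. c k ! j * f j) = f k" if "k < m" for k f
  proof -
    have "(\<Sum>j<m. c k ! j * f j) = (\<Sum>j<m. if j = k then f j else 0)"
      by (rule sum.cong) (auto simp: cnth that)
    also have "\<dots> = f k" using that by simp
    finally show ?thesis .
  qed
  have v1: "\<forall>x\<in>C. lf n h1 x = 0"
    by (rule vanish) (simp add: s1 sumc)
  have v2: "\<forall>x\<in>C. lf n h2 x = 0"
    by (rule vanish) (simp add: s2 sumc)
  have Ceq: "C = {x \<in> words n. lf n h1 x = 0 \<and> lf n h2 x = 0}"
  proof
    show "C \<subseteq> {x \<in> words n. lf n h1 x = 0 \<and> lf n h2 x = 0}" using Cw v1 v2 by auto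
  next
    show "{x \<in> words n. lf n h1 x = 0 \<and> lf n h2 x = 0} \<subseteq> C"
    proof
      fix x assume "x \<in> {x \<in> words n. lf n h1 x = 0 \<and> lf n h2 x = 0}"
      then have xw: "length x = n" and x1: "lf n h1 x = 0" and x2: "lf n h2 x = 0"
        by (auto simp: words_def)
      have "take m x \<in> words m" using xw nm by (simp add: words_def)
      then obtain y where y: "y \<in> C" "take m y = take m x" using surjT by (metis imageE)
      have yl: "length y = n" using lenC y(1) .
      define z where "z = map2 (+) x (map ((*) (-1)) y)"
      have zl: "length z = n" using xw yl by (simp add: z_def)
      have zn: "z ! i = x ! i - y ! i" if "i < n" for i
        using that xw yl by (simp add: z_def)
      have zpre: "z ! i = 0" if "i < m" for i
      proof -
        have "x ! i = y ! i" using y(2) that by (metis nth_take)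
        then show ?thesis using zn[of i] that nm by simp
      qed
      have "lf n h1 z = lf n h1 x + (-1) * lf n h1 y" unfolding z_def
        using lf_add[OF xw, of "map ((*) (-1)) y"] lf_smul[OF yl] yl by simp
      then have "lf n h1 z = 0" using x1 v1 y(1) by simp
      then have zm: "z ! m = 0" unfolding s1 using zpre by simp
      have "lf n h2 z = lf n h2 x + (-1) * lf n h2 y" unfolding z_def
        using lf_add[OF xw, of "map ((*) (-1)) y"] lf_smul[OF yl] yl by simp
      then have "lf n h2 z = 0" using x2 v2 y(1) by simp
      then have zm2: "z ! Suc m = 0" unfolding s2 using zpre by simp
      have "x = y"
      proof (rule nth_equalityI)
        show "length x = length y" using xw yl by simp
        fix i assume "i < length x"
        then have "i < m \<or> i = m \<or> i = Suc m" using xw nm by auto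
        then have "z ! i = 0" using zpre zm zm2 by auto
        then show "x ! i = y ! i" using zn \<open>i < length x\<close> xw by simp
      qed
      then show "x \<in> C" using y(1) by simp
    qed
  qed
  have det: "h1 i * h2 j \<noteq> h1 j * h2 i" if ij: "i < n" "j < n" "i \<noteq> j" for i j
  proof
    assume "h1 i * h2 j = h1 j * h2 i"
    then obtain a b where ab: "a \<noteq> 0 \<or> b \<noteq> 0" "a * h1 i + b * h1 j = 0" "a * h2 i + b * h2 j = 0"
      using dep_pair by metis
    define z :: "'a list" where "z = map (\<lambda>k. if k = i then a else if k = j then b else 0) [0..<n]"
    have lz: "lf n w z = a * w i + b * w j" for w
    proof -
      have "lf n w z = (\<Sum>k<n. (if k = i then a * w k else 0) + (if k = j then b * w k else 0))"
        unfolding lf_def z_def by (rule sum.cong) (auto simp: ij)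
      also have "\<dots> = a * w i + b * w j" using ij by (simp add: sum.distrib)
      finally show ?thesis .
    qed
    have "z \<in> C" unfolding Ceq using ab lz by (simp add: words_def z_def)
    moreover have "z \<noteq> replicate n 0"
    proof
      assume "z = replicate n 0"
      then have "z ! i = 0" "z ! j = 0" using ij by auto
      then show False using ab ij by (auto simp: z_def)
    qed
    ultimately have "3 \<le> hamming_dist z (replicate n 0)" using dist zC by blast
    moreover have "hamming_dist z (replicate n 0) \<le> card {i, j}"
      by (rule hd_le_support) (auto simp: z_def)
    moreover have "card {i, j} \<le> 2" by (simp add: card_insert_if)
    ultimately show False by linarith
  qed
  show ?thesis using n3 det Ceq by blast
qed

lemma lf_image:
  fixes h1 h2 g1 g2 d :: "nat \<Rightarrow> 'a::field" and \<sigma> :: "nat \<Rightarrow> nat"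
  assumes perm: "\<sigma> permutes {..<n}"
    and dg: "\<forall>i<n. d i \<noteq> 0 \<and> g1 i = d i * (a * h1 (\<sigma> i) + b * h2 (\<sigma> i))"
  shows "lf n g1 (map (\<lambda>i. inverse (d i) * (x ! \<sigma> i)) [0..<n]) = a * lf n h1 x + b * lf n h2 x"
proof -
  have "lf n g1 (map (\<lambda>i. inverse (d i) * (x ! \<sigma> i)) [0..<n])
      = (\<Sum>i<n. inverse (d i) * (x ! \<sigma> i) * g1 i)" unfolding lf_def by simp
  also have "\<dots> = (\<Sum>i<n. x ! \<sigma> i * (a * h1 (\<sigma> i) + b * h2 (\<sigma> i)))"
    by (rule sum.cong) (use dg in auto)
  also have "\<dots> = (\<Sum>j<n. x ! j * (a * h1 j + b * h2 j))"
    using sum.permute[OF perm, of "\<lambda>j. x ! j * (a * h1 j + b * h2 j)"] by (simp add: comp_def)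
  also have "\<dots> = a * lf n h1 x + b * lf n h2 x"
    unfolding lf_def by (simp add: sum_distrib_left sum.distrib algebra_simps)
  finally show ?thesis .
qed

theorem lemma5:
  fixes C D :: "'a::{finite,field} list set" and q n :: nat
  assumes "CARD('a) = q"
    and "\<exists>p k. prime p \<and> 0 < k \<and> q = p ^ k"
    and "n \<in> {q - 1, q, q + 1}"
    and "linear_code n C" and "is_code n (q ^ (n - 2)) 3 C"
    and "linear_code n D" and "is_code n (q ^ (n - 2)) 3 D"
  shows "equivalent_codes n C D"
proof -
  obtain h1 h2 where n3: "3 \<le> n" and dh: "\<forall>i<n. \<forall>j<n. i \<noteq> j \<longrightarrow> h1 i * h2 j \<noteq> h1 j * h2 i"
    and Ceq: "C = {x \<in> words n. lf n h1 x = 0 \<and> lf n h2 x = 0}"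
    using code_structure[of n C] assms by auto
  obtain g1 g2 where dg: "\<forall>i<n. \<forall>j<n. i \<noteq> j \<longrightarrow> g1 i * g2 j \<noteq> g1 j * g2 i"
    and Deq: "D = {x \<in> words n. lf n g1 x = 0 \<and> lf n g2 x = 0}"
    using code_structure[of n D] assms by auto
  have nle: "n \<le> CARD('a) + 1" and nge: "CARD('a) \<le> n + 1" using assms(1,3) by auto
  obtain \<sigma> d m11 m12 m21 m22 where perm: "\<sigma> permutes {..<n}" and
    dd: "\<forall>i<n. d i \<noteq> 0 \<and> g1 i = d i * (m11 * h1 (\<sigma> i) + m12 * h2 (\<sigma> i)) \<and>
     g2 i = d i * (m21 * h1 (\<sigma> i) + m22 * h2 (\<sigma> i))"
  proof -
    have "2 \<le> n" using n3 by simp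
    from match[OF this nle nge dh dg] show ?thesis using that by blast
  qed
  define \<pi> where "\<pi> i t = inverse (d i) * t" for i t
  define \<phi> where "\<phi> x = map (\<lambda>i. \<pi> i (x ! \<sigma> i)) [0..<n]" for x :: "'a list"
  have bij\<pi>: "bij (\<pi> i)" if "i < n" for i
  proof -
    have dn: "d i \<noteq> 0" using dd that by auto
    show ?thesis unfolding bij_def inj_def surj_def \<pi>_def
    proof (intro conjI allI impI)
      fix x y assume "inverse (d i) * x = inverse (d i) * y" then show "x = y" using dn by simp
    next
      fix y show "\<exists>x. y = inverse (d i) * x" using dn by (intro exI[of _ "d i * y"]) simp
    qed
  qed
  have sub: "\<phi> ` C \<subseteq> D"
  proof
    fix y assume "y \<in> \<phi> ` C"
    then obtain x where x: "x \<in> C" "y = \<phi> x" by auto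
    have "lf n g1 y = m11 * lf n h1 x + m12 * lf n h2 x"
      unfolding x(2) \<phi>_def \<pi>_def by (rule lf_image[OF perm]) (use dd in auto)
    moreover have "lf n g2 y = m21 * lf n h1 x + m22 * lf n h2 x"
      unfolding x(2) \<phi>_def \<pi>_def by (rule lf_image[OF perm]) (use dd in auto)
    ultimately show "y \<in> D" using x Ceq unfolding Deq by (auto simp: \<phi>_def words_def)
  qed
  have inj: "inj_on \<phi> C"
  proof (rule inj_onI)
    fix x y assume xy: "x \<in> C" "y \<in> C" "\<phi> x = \<phi> y"
    have lx: "length x = n" "length y = n" using xy Ceq by (auto simp: words_def)
    have e: "x ! \<sigma> i = y ! \<sigma> i" if "i < n" for i
    proof -
      have "\<phi> x ! i = \<phi> y ! i" using xy by simp
      then show ?thesis using that bij\<pi>[OF that] by (simp add: \<phi>_def bij_def inj_def)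
    qed
    show "x = y"
    proof (rule nth_equalityI)
      show "length x = length y" using lx by simp
      fix j assume "j < length x"
      then have "j \<in> \<sigma> ` {..<n}" using permutes_image[OF perm] lx by simp
      then show "x ! j = y ! j" using e by auto
    qed
  qed
  have finD: "finite D" using assms(7) by (simp add: is_code_def)
  have "card (\<phi> ` C) = card D"
    using card_image[OF inj] assms(5,7) by (simp add: is_code_def)
  then have "D = \<phi> ` C" using card_subset_eq[OF finD sub] by simp
  then show ?thesis unfolding equivalent_codes_def
    using perm bij\<pi> by (intro exI[of _ \<sigma>] exI[of _ \<pi>]) (auto simp: \<phi>_def atLeast0LessThan)
qed

end
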